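(* Let $G^{c}$ be the graph obtained from the graph $G$ of the construction described in the context by additionally adding all edges $p_ip_{i'}$ for distinct $i,i'\in[t]$, and let $\ell=2|\mathcal{C}|+\frac{2n}{3}+1$. If $G^{c}$ has an acyclic matching of size at least $\ell$, then for some $q\in[t]$ the instance $(X,\mathcal{S}_q)$ of \textsc{Exact-3-Cover} is a Yes-instance.
   Context: Construction. Let $n=3c$ with $c\in\mathbb{N}$, $X=[n]$, and let $(X,\mathcal{S}_1),\dots,(X,\mathcal{S}_t)$ be instances of \textsc{Exact-3-Cover} (each $\mathcal{S}_i$ a collection of 3-element subsets of $X$, all $\mathcal{S}_i$ of the same size $m$ and pairwise distinct as collections). An instance $(X,\mathcal{S})$ is a Yes-instance if some subcollection of $\mathcal{S}$ covers every element of $X$ exactly once. Let $\mathcal{C}=\bigcup_{i\in[t]}\mathcal{S}_i=\{s_1,\dots,s_{|\mathcal{C}|}\}$ (distinct 3-sets). The graph $G$: a vertex set $X'=\{v_a:a\in X\}$; for each $s_j=\{a,b,c\}\in\mathcal{C}$ a set gadget $Q_j$ with vertices $u_{ja},u_{jb},u_{jc}$ (interface vertices), $u_j,w_j,u_j',w_j'$, where each of $u_j,w_j$ is adjacent to each of $u_{ja},u_{jb},u_{jc}$, and additionally $u_jw_j,u_ju_j',w_jw_j'$ are edges; for each $s_j\in\mathcal{C}$ and $d\in s_j$ the edge $u_{jd}v_d$; a vertex $p$ and vertices $P=\{p_1,\dots,p_t\}$ with edges $pp_i$ for all $i$; and for each $i\in[t]$ and each $s_j\in\mathcal{C}\setminus\mathcal{S}_i$,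 edges from $p_i$ to the three interface vertices of $Q_j$. There are no other edges. A matching $M$ is acyclic if the subgraph induced by the endpoints of its edges is a forest. *)

theory Defs
  imports Main
begin

text \<open>Vertices of the construction. Set gadgets are indexed by the 3-set
  s_j itself (instead of its index j in an enumeration of C).\<close>
datatype vtx =
    Xv nat
  | Iv "nat set" nat  \<comment> \<open>interface vertex u_{j a}\<close>
  | Uv "nat set"
  | Wv "nat set"
  | U'v "nat set"
  | W'v "nat set"
  | Pv
  | Piv nat

text \<open>Simple graphs are given by their edge set (a set of 2-element vertex sets).\<close>

definition matching :: "'a set set \<Rightarrow> 'a set set \<Rightarrow> bool" where
  "matching E M \<longleftrightarrow> M \<subseteq> E \<and> (\<forall>e\<in>M. \<forall>f\<in>M. e \<noteq> f \<longrightarrow> e \<inter> f = {})"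

definition induced_edges :: "'a set set \<Rightarrow> 'a set \<Rightarrow> 'a set set" where
  "induced_edges E S = {e \<in> E. e \<subseteq> S}"

definition has_cycle :: "'a set set \<Rightarrow> bool" where
  "has_cycle E \<longleftrightarrow> (\<exists>vs. length vs \<ge> 3 \<and> distinct vs \<and>
      (\<forall>i. Suc i < length vs \<longrightarrow> {vs ! i, vs ! Suc i} \<in> E) \<and> {last vs, hd vs} \<in> E)"

definition forest :: "'a set set \<Rightarrow> bool" where
  "forest E \<longleftrightarrow> \<not> has_cycle E"

definition acyclic_matching :: "'a set set \<Rightarrow> 'a set set \<Rightarrow> bool" where
  "acyclic_matching E M \<longleftrightarrow> matching E M \<and> forest (induced_edges E (\<Union>M))"

definition exact_cover_yes :: "nat set \<Rightarrow> nat set set \<Rightarrow> bool" where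
  "exact_cover_yes X S \<longleftrightarrow> (\<exists>T \<subseteq> S. \<forall>a\<in>X. \<exists>!s. s \<in> T \<and> a \<in> s)"

definition allsets :: "nat \<Rightarrow> (nat \<Rightarrow> nat set set) \<Rightarrow> nat set set" where
  "allsets t S = (\<Union>i\<in>{1..t}. S i)"

definition G_edges :: "nat \<Rightarrow> (nat \<Rightarrow> nat set set) \<Rightarrow> vtx set set" where
  "G_edges t S =
     {{Iv s a, Uv s} | s a. s \<in> allsets t S \<and> a \<in> s}
   \<union> {{Iv s a, Wv s} | s a. s \<in> allsets t S \<and> a \<in> s}
   \<union> {{Uv s, Wv s} | s. s \<in> allsets t S}
   \<union> {{Uv s, U'v s} | s. s \<in> allsets t S}
   \<union> {{Wv s, W'v s} | s. s \<in> allsets t S}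
   \<union> {{Iv s a, Xv a} | s a. s \<in> allsets t S \<and> a \<in> s}
   \<union> {{Pv, Piv i} | i. i \<in> {1..t}}
   \<union> {{Piv i, Iv s a} | i s a. i \<in> {1..t} \<and> s \<in> allsets t S - S i \<and> a \<in> s}"

definition Gc_edges :: "nat \<Rightarrow> (nat \<Rightarrow> nat set set) \<Rightarrow> vtx set set" where
  "Gc_edges t S = G_edges t S \<union> {{Piv i, Piv i'} | i i'. i \<in> {1..t} \<and> i' \<in> {1..t} \<and> i \<noteq> i'}"

end

theory Submission imports Defs begin

lemma matching_unique: "matching E M \<Longrightarrow> e \<in> M \<Longrightarrow> f \<in> M \<Longrightarrow> v \<in> e \<Longrightarrow> v \<in> f \<Longrightarrow> e = f"
  unfolding matching_def by blast

lemma tri: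
  assumes "acyclic_matching E M" "a\<noteq>b" "b\<noteq>c" "a\<noteq>c" "{a,b}\<in>E" "{b,c}\<in>E" "{c,a}\<in>E"
    "a \<in> \<Union>M" "b \<in> \<Union>M" "c \<in> \<Union>M"
  shows False
proof -
  have "has_cycle (induced_edges E (\<Union>M))" unfolding has_cycle_def induced_edges_def
    apply (rule exI[of _ "[a,b,c]"]) using assms by (auto simp: less_Suc_eq)
  thus False using assms(1) unfolding acyclic_matching_def forest_def by blast
qed

lemma quad:
  assumes "acyclic_matching E M" "distinct [a,b,c,d]" "{a,b}\<in>E" "{b,c}\<in>E" "{c,d}\<in>E" "{d,a}\<in>E"
    "a \<in> \<Union>M" "b \<in> \<Union>M" "c \<in> \<Union>M" "d \<in> \<Union>M"
  shows False
proof -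
  have "has_cycle (induced_edges E (\<Union>M))" unfolding has_cycle_def induced_edges_def
    apply (rule exI[of _ "[a,b,c,d]"]) using assms by (auto simp: less_Suc_eq)
  thus False using assms(1) unfolding acyclic_matching_def forest_def by blast
qed

definition gv :: "nat set \<Rightarrow> vtx set" where "gv s = {Uv s, Wv s, U'v s, W'v s} \<union> Iv s ` s"
definition Mins :: "vtx set set \<Rightarrow> nat set \<Rightarrow> vtx set set" where "Mins M s = {e\<in>M. e \<subseteq> gv s}"
definition Xa :: "vtx set set \<Rightarrow> nat set \<Rightarrow> nat set" where "Xa M s = {a\<in>s. {Iv s a, Xv a} \<in> M}"
definition MY :: "vtx set set \<Rightarrow> nat set \<Rightarrow> vtx set set" where
  "MY M s = {e\<in>M. \<exists>i a. a\<in>s \<and> e = {Piv i, Iv s a}}"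
definition MPP :: "vtx set set \<Rightarrow> vtx set set" where "MPP M = {e\<in>M. e \<subseteq> insert Pv (range Piv)}"
definition Cl :: "nat \<Rightarrow> vtx set" where "Cl t = insert Pv (Piv ` {1..t})"

lemma inside_UW: "e \<in> Gc_edges t S \<Longrightarrow> e \<subseteq> gv s \<Longrightarrow> Uv s \<in> e \<or> Wv s \<in> e"
  unfolding Gc_edges_def G_edges_def gv_def by auto

lemma gc_IU: "s \<in> allsets t S \<Longrightarrow> a \<in> s \<Longrightarrow> {Iv s a, Uv s} \<in> Gc_edges t S \<and> {Uv s, Iv s a} \<in> Gc_edges t S
   \<and> {Iv s a, Wv s} \<in> Gc_edges t S \<and> {Wv s, Iv s a} \<in> Gc_edges t S \<and> {Uv s, Wv s} \<in> Gc_edges t S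
   \<and> {Wv s, Uv s} \<in> Gc_edges t S"
  unfolding Gc_edges_def G_edges_def by (auto simp: insert_commute)

lemma gc_PI: "i \<in> {1..t} \<Longrightarrow> s \<in> allsets t S \<Longrightarrow> s \<notin> S i \<Longrightarrow> a \<in> s \<Longrightarrow>
   {Piv i, Iv s a} \<in> Gc_edges t S \<and> {Iv s a, Piv i} \<in> Gc_edges t S"
  unfolding Gc_edges_def G_edges_def by (auto simp: insert_commute)

lemma gc_PI_inv: "{Piv i, Iv s a} \<in> Gc_edges t S \<Longrightarrow> i \<in> {1..t} \<and> s \<in> allsets t S \<and> s \<notin> S i \<and> a \<in> s"
  unfolding Gc_edges_def G_edges_def by (auto simp: doubleton_eq_iff)

lemma gc_clique: "u \<in> Cl t \<Longrightarrow> v \<in> Cl t \<Longrightarrow> u \<noteq> v \<Longrightarrow> {u,v} \<in> Gc_edges t S"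
  unfolding Gc_edges_def G_edges_def Cl_def by (auto simp: insert_commute)

lemma MPP_shape: "e \<in> Gc_edges t S \<Longrightarrow> e \<subseteq> insert Pv (range Piv) \<Longrightarrow>
   \<exists>u v. e = {u,v} \<and> u \<noteq> v \<and> u \<in> Cl t \<and> v \<in> Cl t"
  unfolding Gc_edges_def G_edges_def Cl_def
  apply auto
  subgoal for i by (rule exI[of _ Pv], rule exI[of _ "Piv i"]) auto
  subgoal for i i' by (rule exI[of _ "Piv i"], rule exI[of _ "Piv i'"]) auto
  done

lemma cover: "e \<in> Gc_edges t S \<Longrightarrow> e \<in> M \<Longrightarrow>
  e \<in> (\<Union>s\<in>allsets t S. Mins M s \<union> MY M s) \<union> (\<lambda>(s,a). {Iv s a, Xv a}) ` Sigma (allsets t S) (Xa M) \<union> MPP M"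
  unfolding Gc_edges_def G_edges_def Mins_def MY_def MPP_def Xa_def gv_def
  by (auto simp: image_iff)

lemma card_star: "finite M \<Longrightarrow> matching E M \<Longrightarrow> card {e\<in>M. v\<in>e} \<le> 1"
  using card_le_Suc0_iff_eq[of "{e\<in>M. v\<in>e}"] matching_unique[of E M] by auto

lemma am_sub: "acyclic_matching E M \<Longrightarrow> M \<subseteq> E"
  unfolding acyclic_matching_def matching_def by blast

lemma am_match: "acyclic_matching E M \<Longrightarrow> matching E M"
  unfolding acyclic_matching_def by blast

lemma in_facts:
  assumes fin: "finite M" and AM: "acyclic_matching (Gc_edges t S) M"
  shows "card (Mins M s) \<le> 2"
    and "card (Mins M s) \<ge> 1 \<Longrightarrow> Uv s \<in> \<Union>M \<or> Wv s \<in> \<Union>M"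
    and "card (Mins M s) = 2 \<Longrightarrow> Uv s \<in> \<Union>M \<and> Wv s \<in> \<Union>M"
proof -
  have sub: "Mins M s \<subseteq> {e\<in>M. Uv s \<in> e} \<union> {e\<in>M. Wv s \<in> e}"
    using inside_UW am_sub[OF AM] unfolding Mins_def by blast
  have c1: "card {e\<in>M. Uv s \<in> e} \<le> 1" "card {e\<in>M. Wv s \<in> e} \<le> 1"
    using card_star[OF fin am_match[OF AM]] by auto
  have le: "card (Mins M s) \<le> card {e\<in>M. Uv s \<in> e} + card {e\<in>M. Wv s \<in> e}"
    by (rule order_trans[OF card_mono[OF _ sub] card_Un_le]) (use fin in auto)
  show "card (Mins M s) \<le> 2" using le c1 by linarith
  show "card (Mins M s) \<ge> 1 \<Longrightarrow> Uv s \<in> \<Union>M \<or> Wv s \<in> \<Union>M"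
  proof (rule ccontr)
    assume "card (Mins M s) \<ge> 1" "\<not> (Uv s \<in> \<Union>M \<or> Wv s \<in> \<Union>M)"
    then have "{e\<in>M. Uv s \<in> e} = {}" "{e\<in>M. Wv s \<in> e} = {}" by auto
    with le \<open>card (Mins M s) \<ge> 1\<close> show False by simp
  qed
  show "card (Mins M s) = 2 \<Longrightarrow> Uv s \<in> \<Union>M \<and> Wv s \<in> \<Union>M"
  proof (rule ccontr)
    assume "card (Mins M s) = 2" "\<not> (Uv s \<in> \<Union>M \<and> Wv s \<in> \<Union>M)"
    then have "{e\<in>M. Uv s \<in> e} = {} \<or> {e\<in>M. Wv s \<in> e} = {}" by auto
    then have "card {e\<in>M. Uv s \<in> e} = 0 \<or> card {e\<in>M. Wv s \<in> e} = 0" by (metis card.empty)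
    with le c1 \<open>card (Mins M s) = 2\<close> show False by linarith
  qed
qed

lemma clique3:
  assumes AM: "acyclic_matching (Gc_edges t S) M"
    and "u \<in> Cl t" "v \<in> Cl t" "w \<in> Cl t" "u \<noteq> v" "v \<noteq> w" "u \<noteq> w"
    "u \<in> \<Union>M" "v \<in> \<Union>M" "w \<in> \<Union>M"
  shows False
  using tri[OF AM, of u v w] gc_clique[of _ t _ S] assms by auto

lemma quad_gadget:
  assumes AM: "acyclic_matching (Gc_edges t S) M"
    and "i \<in> {1..t}" "s \<in> allsets t S" "s \<notin> S i" "a \<in> s" "b \<in> s" "a \<noteq> b"
    "Piv i \<in> \<Union>M" "Iv s a \<in> \<Union>M" "Iv s b \<in> \<Union>M" "V = Uv s \<or> V = Wv s" "V \<in> \<Union>M"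
  shows False
proof -
  have "{Iv s a, V} \<in> Gc_edges t S" "{V, Iv s b} \<in> Gc_edges t S"
    using gc_IU[OF assms(3,5)] gc_IU[OF assms(3,6)] assms(11) by auto
  moreover have "{Piv i, Iv s a} \<in> Gc_edges t S" "{Iv s b, Piv i} \<in> Gc_edges t S"
    using gc_PI[OF assms(2,3,4,5)] gc_PI[OF assms(2,3,4,6)] by auto
  moreover have "distinct [Piv i, Iv s a, V, Iv s b]" using assms(7,11) by auto
  ultimately show False using quad[OF AM, of "Piv i" "Iv s a" V "Iv s b"] assms by auto
qed

lemma G1:
  assumes fin: "finite M" and AM: "acyclic_matching (Gc_edges t S) M"
    and sA: "s \<in> allsets t S" and c2: "card (Mins M s) = 2"
  shows "Xa M s = {} \<and> MY M s = {}"
proof -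
  have UW: "Uv s \<in> \<Union>M" "Wv s \<in> \<Union>M" using in_facts(3)[OF fin AM c2] by auto
  have nI: "Iv s a \<notin> \<Union>M" if "a \<in> s" for a
  proof
    assume "Iv s a \<in> \<Union>M"
    then show False using tri[OF AM, of "Iv s a" "Uv s" "Wv s"] gc_IU[OF sA that] UW by auto
  qed
  have "Xa M s = {}" using nI unfolding Xa_def by blast
  moreover have "MY M s = {}" using nI unfolding MY_def by blast
  ultimately show ?thesis by blast
qed

lemma G2:
  assumes fin: "finite M" and AM: "acyclic_matching (Gc_edges t S) M"
  shows "card (MY M s) \<le> 1"
proof -
  have fin2: "finite (MY M s)" using fin unfolding MY_def by auto
  have "\<forall>e1\<in>MY M s. \<forall>e2\<in>MY M s. e1 = e2"
  proof (intro ballI, rule ccontr)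
    fix e1 e2 assume e1: "e1 \<in> MY M s" and e2: "e2 \<in> MY M s" and ne: "e1 \<noteq> e2"
    obtain i a where ia: "a \<in> s" "e1 = {Piv i, Iv s a}" "e1 \<in> M" using e1 unfolding MY_def by blast
    obtain i' b where ib: "b \<in> s" "e2 = {Piv i', Iv s b}" "e2 \<in> M" using e2 unfolding MY_def by blast
    have ii: "i \<noteq> i'" using matching_unique[OF am_match[OF AM] ia(3) ib(3), of "Piv i"] ne ia ib by auto
    have inv: "i' \<in> {1..t} \<and> s \<in> allsets t S \<and> s \<notin> S i' \<and> b \<in> s"
      using gc_PI_inv[of i' s b t S] am_sub[OF AM] ib by auto
    have inv1: "i \<in> {1..t}" using gc_PI_inv[of i s a t S] am_sub[OF AM] ia by auto
    have "{Iv s a, Piv i'} \<in> Gc_edges t S" using gc_PI[of i' t s S a] inv ia(1) by auto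
    moreover have "{Piv i', Piv i} \<in> Gc_edges t S" using gc_clique[of "Piv i'" t "Piv i" S] inv inv1 ii
      unfolding Cl_def by auto
    moreover have "{Piv i, Iv s a} \<in> Gc_edges t S" using am_sub[OF AM] ia by auto
    ultimately show False using tri[OF AM, of "Piv i" "Iv s a" "Piv i'"] ii ia ib by auto
  qed
  then show ?thesis using card_le_Suc0_iff_eq[OF fin2] by simp
qed

lemma G3:
  assumes fin: "finite M" and AM: "acyclic_matching (Gc_edges t S) M"
    and c1: "card (Mins M s) \<ge> 1" and y: "MY M s \<noteq> {}"
  shows "Xa M s = {}"
proof (rule ccontr)
  assume "Xa M s \<noteq> {}"
  then obtain b where b: "b \<in> s" "{Iv s b, Xv b} \<in> M" unfolding Xa_def by auto
  obtain i a where ia: "a \<in> s" "{Piv i, Iv s a} \<in> M" using y unfolding MY_def by blast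
  have ab: "a \<noteq> b"
  proof
    assume "a = b"
    then have "{Iv s b, Xv b} = {Piv i, Iv s a}"
      using matching_unique[OF am_match[OF AM] b(2) ia(2), of "Iv s a"] by auto
    then show False by (auto simp: doubleton_eq_iff)
  qed
  have inv: "i \<in> {1..t} \<and> s \<in> allsets t S \<and> s \<notin> S i \<and> a \<in> s"
    using gc_PI_inv[of i s a t S] am_sub[OF AM] ia by auto
  obtain V where V: "V = Uv s \<or> V = Wv s" "V \<in> \<Union>M" using in_facts(2)[OF fin AM c1] by blast
  show False using quad_gadget[OF AM, of i s a b V] inv b ia ab V by blast
qed

theorem lemma18:
  fixes c t :: nat and S :: "nat \<Rightarrow> nat set set" and M :: "vtx set set"
  assumes "n = 3 * c"
    and "\<forall>i\<in>{1..t}. \<forall>s\<in>S i. s \<subseteq> {1..n} \<and> card s = 3"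
    and "\<forall>i\<in>{1..t}. \<forall>j\<in>{1..t}. card (S i) = card (S j)"
    and "\<forall>i\<in>{1..t}. \<forall>j\<in>{1..t}. i \<noteq> j \<longrightarrow> S i \<noteq> S j"
    and "acyclic_matching (Gc_edges t S) M"
    and "card M \<ge> 2 * card (allsets t S) + 2 * n div 3 + 1"
  shows "\<exists>q\<in>{1..t}. exact_cover_yes {1..n} (S q)"
proof -
  note AM = assms(5)
  define A where "A = allsets t S"
  have c3: "\<forall>s\<in>A. card s = 3 \<and> s \<subseteq> {1..n}" using assms(2) unfolding A_def allsets_def by blast
  have fA: "finite A"
    by (rule finite_subset[of _ "Pow {1..n}"]) (use c3 in auto)
  have fs: "finite s" if "s \<in> A" for s using c3 that finite_subset[of s "{1..n}"] by auto
  have finM: "finite M" using assms(6) card_gt_0_iff by fastforce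
  have Msub: "M \<subseteq> Gc_edges t S" using am_sub[OF AM] .
  have MT: "matching (Gc_edges t S) M" using am_match[OF AM] .
  define inn where "inn s = card (Mins M s)" for s
  define x where "x s = card (Xa M s)" for s
  define y where "y s = card (MY M s)" for s
  define k0 where "k0 = card (MPP M)"
  have fMins: "finite (Mins M s)" for s using finM unfolding Mins_def by auto
  have fMY: "finite (MY M s)" for s using finM unfolding MY_def by auto
  have fMPP: "finite (MPP M)" using finM unfolding MPP_def by auto
  have fXa: "finite (Xa M s)" if "s \<in> A" for s using fs[OF that] unfolding Xa_def by auto
  have Xasub: "Xa M s \<subseteq> s" for s unfolding Xa_def by auto
  define U1 where "U1 = (\<Union>s\<in>A. Mins M s \<union> MY M s)"
  define U2 where "U2 = (\<lambda>(s,a). {Iv s a, Xv a}) ` Sigma A (Xa M)"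
  have fSig: "finite (Sigma A (Xa M))" using fA fXa by auto
  have cSig: "card (Sigma A (Xa M)) = (\<Sum>s\<in>A. x s)" unfolding x_def using fA fXa by simp
  have "M \<subseteq> U1 \<union> U2 \<union> MPP M" using cover[of _ t S M] Msub unfolding U1_def U2_def A_def by blast
  moreover have "finite U1" unfolding U1_def using fA fMins fMY by auto
  moreover have "finite U2" unfolding U2_def using fSig by auto
  ultimately have h1: "card M \<le> card (U1 \<union> U2 \<union> MPP M)" using fMPP by (intro card_mono) auto
  have h2: "card (U1 \<union> U2 \<union> MPP M) \<le> card (U1 \<union> U2) + card (MPP M)" by (rule card_Un_le)
  have h3: "card (U1 \<union> U2) \<le> card U1 + card U2" by (rule card_Un_le)
  have h4: "card U1 \<le> (\<Sum>s\<in>A. card (Mins M s \<union> MY M s))" unfolding U1_def using fA by (rule card_UN_le)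
  have h5: "(\<Sum>s\<in>A. card (Mins M s \<union> MY M s)) \<le> (\<Sum>s\<in>A. inn s + y s)"
    unfolding inn_def y_def by (intro sum_mono card_Un_le)
  have h6: "card U2 \<le> (\<Sum>s\<in>A. x s)" unfolding U2_def cSig[symmetric] by (rule card_image_le[OF fSig])
  have cardM: "card M \<le> (\<Sum>s\<in>A. inn s + y s) + (\<Sum>s\<in>A. x s) + k0"
    using h1 h2 h3 h4 h5 h6 unfolding k0_def by linarith
  have injsnd: "inj_on snd (Sigma A (Xa M))"
  proof (rule inj_onI, clarsimp)
    fix s a s' assume "s \<in> A" "a \<in> Xa M s" "s' \<in> A" "a \<in> Xa M s'"
    then have "{Iv s a, Xv a} \<in> M" "{Iv s' a, Xv a} \<in> M" unfolding Xa_def by auto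
    then have "{Iv s a, Xv a} = {Iv s' a, Xv a}" using matching_unique[OF MT, of _ _ "Xv a"] by auto
    then show "s = s'" by (auto simp: doubleton_eq_iff)
  qed
  have snd_sub: "snd ` Sigma A (Xa M) \<subseteq> {1..n}" using c3 Xasub by fastforce
  have sumx: "(\<Sum>s\<in>A. x s) \<le> n"
    using card_inj_on_le[OF injsnd snd_sub] cSig by simp
  have x3: "x s \<le> 3" if "s \<in> A" for s
    unfolding x_def using card_mono[OF fs[OF that] Xasub] c3 that by auto
  have inn2: "inn s \<le> 2" for s unfolding inn_def using in_facts(1)[OF finM AM] .
  have y1: "y s \<le> 1" for s unfolding y_def using G2[OF finM AM] .
  have gad: "3 * inn s + x s + 3 * y s \<le> 6" if sA: "s \<in> A" for s
  proof -
    consider "inn s = 0" | "inn s = 1" | "inn s = 2" using inn2[of s] by linarith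
    then show ?thesis
    proof cases
      case 1 then show ?thesis using x3[OF sA] y1[of s] by linarith
    next
      case 2
      show ?thesis
      proof (cases "y s = 0")
        case True then show ?thesis using 2 x3[OF sA] by linarith
      next
        case False
        then have "MY M s \<noteq> {}" unfolding y_def by auto
        then have "x s = 0" using G3[OF finM AM, of s] 2 unfolding x_def inn_def by auto
        then show ?thesis using 2 y1[of s] by linarith
      qed
    next
      case 3
      then have "x s = 0 \<and> y s = 0" using G1[OF finM AM, of s] sA unfolding x_def y_def inn_def A_def by auto
      then show ?thesis using 3 by simp
    qed
  qed
  have k01: "k0 \<le> 1"
  proof -
    have "\<forall>e1\<in>MPP M. \<forall>e2\<in>MPP M. e1 = e2"
    proof (intro ballI, rule ccontr)
      fix e1 e2 assume e1: "e1 \<in> MPP M" and e2: "e2 \<in> MPP M" and ne: "e1 \<noteq> e2"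
      obtain u v where uv: "e1 = {u,v}" "u \<noteq> v" "u \<in> Cl t" "v \<in> Cl t"
        using MPP_shape[of e1 t S] e1 Msub unfolding MPP_def by blast
      obtain w z where wz: "e2 = {w,z}" "w \<noteq> z" "w \<in> Cl t" "z \<in> Cl t"
        using MPP_shape[of e2 t S] e2 Msub unfolding MPP_def by blast
      have "e1 \<in> M" "e2 \<in> M" using e1 e2 unfolding MPP_def by auto
      then have "w \<notin> e1" using matching_unique[OF MT, of e1 e2 w] ne wz by auto
      then show False using clique3[OF AM, of u v w] uv wz \<open>e1 \<in> M\<close> \<open>e2 \<in> M\<close> by auto
    qed
    then show ?thesis unfolding k0_def using card_le_Suc0_iff_eq[OF fMPP] by simp
  qed
  define g where "g s = 6 - (3 * inn s + x s + 3 * y s)" for s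
  have "(\<Sum>s\<in>A. 3 * inn s + x s + 3 * y s) + (\<Sum>s\<in>A. g s) = (\<Sum>s\<in>A. (6::nat))"
    unfolding sum.distrib[symmetric] g_def using gad by (intro sum.cong) auto
  then have eqA: "3 * (\<Sum>s\<in>A. inn s) + (\<Sum>s\<in>A. x s) + 3 * (\<Sum>s\<in>A. y s) + (\<Sum>s\<in>A. g s) = 6 * card A"
    by (simp add: sum.distrib sum_distrib_left)
  have eqM: "(\<Sum>s\<in>A. inn s + y s) = (\<Sum>s\<in>A. inn s) + (\<Sum>s\<in>A. y s)" by (simp add: sum.distrib)
  have big: "6 * card A + 2 * n + 3 \<le> 3 * card M" using assms(6) assms(1) unfolding A_def by simp
  have g0: "(\<Sum>s\<in>A. g s) = 0" and Sxn: "(\<Sum>s\<in>A. x s) = n" and k0one: "k0 = 1"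
    using cardM eqA eqM big sumx k01 by linarith+
  have tight: "3 * inn s + x s + 3 * y s = 6" if "s \<in> A" for s
  proof -
    have "g s = 0" using g0 fA that by simp
    then show ?thesis using gad[OF that] unfolding g_def by linarith
  qed
  have "MPP M \<noteq> {}" using k0one unfolding k0_def by auto
  then obtain e0 where e0: "e0 \<in> MPP M" by blast
  obtain u v where uv: "e0 = {u,v}" "u \<noteq> v" "u \<in> Cl t" "v \<in> Cl t"
    using MPP_shape[of e0 t S] e0 Msub unfolding MPP_def by blast
  have e0M: "e0 \<in> M" using e0 unfolding MPP_def by auto
  have y0: "y s = 0" for s
  proof (rule ccontr)
    assume "y s \<noteq> 0"
    then have "MY M s \<noteq> {}" unfolding y_def by auto
    then obtain i a where ia: "a \<in> s" "{Piv i, Iv s a} \<in> M" unfolding MY_def by blast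
    have "{Piv i, Iv s a} \<in> Gc_edges t S" using Msub ia(2) by blast
    then have it: "i \<in> {1..t}" using gc_PI_inv[of i s a t S] by blast
    have "Piv i \<notin> e0"
    proof
      assume "Piv i \<in> e0"
      then have "{Piv i, Iv s a} = e0" using matching_unique[OF MT ia(2) e0M, of "Piv i"] by simp
      then have "Iv s a \<in> e0" by blast
      moreover have "e0 \<subseteq> insert Pv (range Piv)" using e0 unfolding MPP_def by blast
      ultimately have "Iv s a = Pv \<or> (\<exists>z. Iv s a = Piv z)" by blast
      then show False by simp
    qed
    then have d: "u \<noteq> Piv i" "v \<noteq> Piv i" using uv(1) by auto
    have pc: "Piv i \<in> Cl t" using it by (simp add: Cl_def)
    have sat: "u \<in> \<Union>M" "v \<in> \<Union>M" "Piv i \<in> \<Union>M" using uv e0M ia by blast+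
    show False by (rule clique3[OF AM uv(3,4) pc uv(2) d(2) d(1) sat])
  qed
  obtain q where q: "q \<in> {1..t}" "Piv q \<in> \<Union>M"
  proof -
    have "u \<noteq> Pv \<or> v \<noteq> Pv" using uv by auto
    then obtain w where w: "w \<in> e0" "w \<in> Cl t" "w \<noteq> Pv" using uv by blast
    then obtain q where q: "q \<in> {1..t}" "w = Piv q" unfolding Cl_def by blast
    have "Piv q \<in> \<Union>M" using w(1) q(2) e0M by blast
    then show ?thesis using that q(1) by blast
  qed
  define T where "T = {s\<in>A. x s = 3}"
  have cases2: "(inn s = 2 \<and> x s = 0) \<or> (inn s = 1 \<and> x s = 3)" if "s \<in> A" for s
    using tight[OF that] y0[of s] inn2[of s] x3[OF that] by arith
  have XaT: "Xa M s = s" if "s \<in> T" for s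
  proof -
    have "s \<in> A" "x s = 3" using that unfolding T_def by auto
    then show ?thesis using card_subset_eq[OF fs[OF \<open>s \<in> A\<close>] Xasub] c3 unfolding x_def by auto
  qed
  have TS: "T \<subseteq> S q"
  proof
    fix s assume sT: "s \<in> T"
    then have sA: "s \<in> A" and x3': "x s = 3" unfolding T_def by auto
    show "s \<in> S q"
    proof (rule ccontr)
      assume nS: "s \<notin> S q"
      have "inn s = 1" using cases2[OF sA] x3' by auto
      then obtain V where V: "V = Uv s \<or> V = Wv s" "V \<in> \<Union>M"
        using in_facts(2)[OF finM AM, of s] unfolding inn_def by auto
      have "card s = 3" using c3 sA by auto
      then obtain a b z where "s = {a,b,z}" "a \<noteq> b" unfolding card_3_iff by blast
      then have ab: "a \<in> s" "b \<in> s" "a \<noteq> b" by auto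
      have "Iv s a \<in> \<Union>M" "Iv s b \<in> \<Union>M" using XaT[OF sT] ab unfolding Xa_def by auto
      then show False using quad_gadget[OF AM q(1) sA[unfolded A_def] nS ab(1,2,3) q(2) _ _ V] by auto
    qed
  qed
  have onto: "snd ` Sigma A (Xa M) = {1..n}"
    using card_subset_eq[OF _ snd_sub] card_image[OF injsnd] cSig Sxn by simp
  have "exact_cover_yes {1..n} (S q)"
    unfolding exact_cover_yes_def
  proof (intro exI[of _ T] conjI TS ballI)
    fix a assume a: "a \<in> {1..n}"
    then obtain s where s: "s \<in> A" "a \<in> Xa M s" using onto by force
    then have "x s \<noteq> 0" using fXa[OF s(1)] unfolding x_def by auto
    then have sT: "s \<in> T" using cases2[OF s(1)] s(1) unfolding T_def by auto
    show "\<exists>!s. s \<in> T \<and> a \<in> s"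
    proof (rule ex1I[of _ s])
      show "s \<in> T \<and> a \<in> s" using sT s Xasub by auto
    next
      fix s' assume s': "s' \<in> T \<and> a \<in> s'"
      have "{Iv s a, Xv a} \<in> M" "{Iv s' a, Xv a} \<in> M"
        using XaT[OF sT] XaT[of s'] s' s unfolding Xa_def by auto
      then have "{Iv s a, Xv a} = {Iv s' a, Xv a}" using matching_unique[OF MT, of _ _ "Xv a"] by auto
      then show "s' = s" by (auto simp: doubleton_eq_iff)
    qed
  qed
  then show ?thesis using q(1) by blast
qed

end
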